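(* Let $\mathcal{A},\mathcal{B}$ be arbitrary index sets and let the coefficients $a_{\alpha\beta},b_{\alpha\beta},c_{\alpha\beta},f_{\alpha\beta},N_{\alpha\beta}$ ($\alpha\in\mathcal{A},\beta\in\mathcal{B}$) on $\Omega=B_2\subset\mathbb{R}^d$ satisfy assumptions (A), (B), (C) described in the context. Let $x_k\in B_1$ and $r_k>0$ with $x_k\to z$ for some $z\in\overline{B_1}$ and $r_k\to 0$ as $k\to\infty$, and let $\mathcal{I}_k:=\mathcal{I}^{r_k}(x_k)$ be the rescaled operators defined in the context. Define $$\mathcal{I}^0u(x):=\sup_{\alpha\in\mathcal{A}}\inf_{\beta\in\mathcal{B}}\{-\mathrm{tr}\,(a_{\alpha\beta}(z)D^2u(x))\}.$$ Then $\mathcal{I}_k$ converges weakly to $\mathcal{I}^0$ in $B_2$, i.e. for every $x_0$ and $\epsilon>0$ with $B_\epsilon(x_0)\subset B_2$ and every $\varphi\in L^\infty(\mathbb{R}^d)\cap C^2(B_\epsilon(x_0))$, we have $\mathcal{I}_k[x,\varphi]\to\mathcal{I}^0\varphi(x)$ uniformly in $x\in B_{\epsilon/2}(x_0)$ as $k\to\infty$.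
   Context: Assumptions, with $\Omega=B_2$ and all uniform in $\alpha\in\mathcal{A},\beta\in\mathcal{B}$: (A) $a_{\alpha\beta}:\overline\Omega\to$ symmetric $d\times d$ matrices, $b_{\alpha\beta}:\overline\Omega\to\mathbb{R}^d$, $c_{\alpha\beta},f_{\alpha\beta}:\overline\Omega\to\mathbb{R}$ are bounded and uniformly continuous on $\overline\Omega$, uniformly in the indices; (B) $\lambda I\le a_{\alpha\beta}\le\Lambda I$ on $\overline\Omega$ for some $0<\lambda\le\Lambda$; (C) $N_{\alpha\beta}:\overline\Omega\times\mathbb{R}^d\to[0,\infty)$ satisfies $0\le N_{\alpha\beta}(x,z)\le K(z)$ for a measurable $K:\mathbb{R}^d\to[0,\infty)$ with $K(0)=N_{\alpha\beta}(x,0)=0$ and $\int_{\mathbb{R}^d}\min\{|z|^2,1\}K(z)\,dz<\infty$, and for each $\sigma>0$ and each $|z|\ge\sigma$, $x\mapsto N_{\alpha\beta}(x,z)$ is uniformly continuous on $\overline\Omega$, uniformly in the indices. Rescaled operator: for $x_0\in B_1$, $r>0$, and $\tilde x:=r(x-x_0)+x_0$, $$\mathcal{I}^r(x_0)[x,u]:=\sup_{\alpha\in\mathcal{A}}\inf_{\beta\in\mathcal{B}}\Big\{-\mathrm{tr}\,(a_{\alpha\beta}(\tilde x)D^2u(x))-I^r_{\alpha\beta}(x_0)[x,u]+r\,b_{\alpha\beta}(\tilde x)\cdot Du(x)+r^2c_{\alpha\beta}(\tilde x)u(x)+r^2f_{\alpha\beta}(\tilde x)\Big\},$$ $$I^r_{\alpha\beta}(x_0)[x,u]:=\int_{\mathbb{R}^d}\big(u(x+z)-u(x)-\chi_{B_{1/r}}(z)Du(x)\cdot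 z\big)\,r^{d+2}N_{\alpha\beta}(\tilde x,rz)\,dz.$$ (This equals $r^2\mathcal{I}[\tilde x, u(r^{-1}(\cdot-x_0)+x_0)]$ for the unscaled operator $\mathcal{I}$ with $\chi_{B_1}$ in the nonlocal term.) $B_r(x)$ is the open ball of radius $r$ centered at $x$. *)

theory Defs
  imports "HOL-Analysis.Analysis"
begin

text \<open>Gradient and Hessian of a real function on real^'n (well defined where u is
  differentiable, resp. where the gradient is differentiable).\<close>
definition grad :: "(real^'n \<Rightarrow> real) \<Rightarrow> real^'n \<Rightarrow> real^'n" where
  "grad u x = (SOME g. (u has_derivative (\<lambda>h. g \<bullet> h)) (at x))"

definition hess :: "(real^'n \<Rightarrow> real) \<Rightarrow> real^'n \<Rightarrow> real^'n^'n" where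
  "hess u x = (SOME H. ((grad u) has_derivative (\<lambda>h. H *v h)) (at x))"

definition C2_on :: "(real^'n) set \<Rightarrow> (real^'n \<Rightarrow> real) \<Rightarrow> bool" where
  "C2_on S u \<longleftrightarrow> (\<forall>x\<in>S. (u has_derivative (\<lambda>h. grad u x \<bullet> h)) (at x))
     \<and> (\<forall>x\<in>S. ((grad u) has_derivative (\<lambda>h. hess u x *v h)) (at x))
     \<and> continuous_on S (hess u)"

definition nonlocal_r ::
  "('a \<Rightarrow> 'b \<Rightarrow> real^'n \<Rightarrow> real^'n \<Rightarrow> real) \<Rightarrow> real \<Rightarrow> real^'n \<Rightarrow> 'a \<Rightarrow> 'b
    \<Rightarrow> real^'n \<Rightarrow> (real^'n \<Rightarrow> real) \<Rightarrow> real" where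
  "nonlocal_r N r x0 \<alpha> \<beta> x u =
     (\<integral>z. (u (x + z) - u x - indicator (ball 0 (1/r)) z * (grad u x \<bullet> z))
            * r ^ (CARD('n) + 2) * N \<alpha> \<beta> (r *\<^sub>R (x - x0) + x0) (r *\<^sub>R z) \<partial>lborel)"

definition op_r ::
  "('a \<Rightarrow> 'b \<Rightarrow> real^'n \<Rightarrow> real^'n^'n) \<Rightarrow> ('a \<Rightarrow> 'b \<Rightarrow> real^'n \<Rightarrow> real^'n)
   \<Rightarrow> ('a \<Rightarrow> 'b \<Rightarrow> real^'n \<Rightarrow> real) \<Rightarrow> ('a \<Rightarrow> 'b \<Rightarrow> real^'n \<Rightarrow> real)
   \<Rightarrow> ('a \<Rightarrow> 'b \<Rightarrow> real^'n \<Rightarrow> real^'n \<Rightarrow> real)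
   \<Rightarrow> real \<Rightarrow> real^'n \<Rightarrow> real^'n \<Rightarrow> (real^'n \<Rightarrow> real) \<Rightarrow> real" where
  "op_r a b c f N r x0 x u =
     (SUP \<alpha>. INF \<beta>.
        (let xt = r *\<^sub>R (x - x0) + x0 in
          - trace (a \<alpha> \<beta> xt ** hess u x) - nonlocal_r N r x0 \<alpha> \<beta> x u
          + r * (b \<alpha> \<beta> xt \<bullet> grad u x) + r\<^sup>2 * c \<alpha> \<beta> xt * u x + r\<^sup>2 * f \<alpha> \<beta> xt))"

definition op_0 :: "('a \<Rightarrow> 'b \<Rightarrow> real^'n \<Rightarrow> real^'n^'n) \<Rightarrow> real^'n
   \<Rightarrow> real^'n \<Rightarrow> (real^'n \<Rightarrow> real) \<Rightarrow> real" where
  "op_0 a z x u = (SUP \<alpha>. INF \<beta>. - trace (a \<alpha> \<beta> z ** hess u x))"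

end

theory Submission
  imports Defs
begin

lemma scale_cov:
  fixes F :: "real^'n \<Rightarrow> real"
  assumes F[measurable]: "F \<in> borel_measurable lborel" and r: "0 < r" and int: "integrable lborel F"
  shows "integrable lborel (\<lambda>z. r ^ CARD('n) * F (r *\<^sub>R z))"
    and "(\<integral>z. r ^ CARD('n) * F (r *\<^sub>R z) \<partial>lborel) = (\<integral>w. F w \<partial>lborel)"
proof -
  have L: "(lborel::(real^'n) measure) = density (distr lborel borel (\<lambda>x::real^'n. 0 + r *\<^sub>R x)) (\<lambda>_. \<bar>r\<bar>^DIM(real^'n))"
    using lborel_affine[of r "0::real^'n"] r by simp
  have m: "(\<lambda>x::real^'n. 0 + r *\<^sub>R x) \<in> measurable lborel borel" by simp
  have "integrable (density (distr lborel borel (\<lambda>x. 0 + r *\<^sub>R x)) (\<lambda>_. \<bar>r\<bar>^DIM(real^'n))) F"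
    using int L by simp
  then have "integrable (distr lborel borel (\<lambda>x. 0 + r *\<^sub>R x)) (\<lambda>x. \<bar>r\<bar>^DIM(real^'n) *\<^sub>R F x)"
    by (subst (asm) integrable_density) auto
  then show "integrable lborel (\<lambda>z. r ^ CARD('n) * F (r *\<^sub>R z))"
    using r by (subst (asm) integrable_distr_eq) auto
  have "(\<integral>w. F w \<partial>lborel) = (\<integral>w. F w \<partial>density (distr lborel borel (\<lambda>x. 0 + r *\<^sub>R x)) (\<lambda>_. \<bar>r\<bar>^DIM(real^'n)))"
    using L by simp
  also have "\<dots> = (\<integral>w. \<bar>r\<bar>^DIM(real^'n) *\<^sub>R F w \<partial>distr lborel borel (\<lambda>x. 0 + r *\<^sub>R x))"
    by (subst integral_density) auto
  also have "\<dots> = (\<integral>z. r ^ CARD('n) * F (r *\<^sub>R z) \<partial>lborel)"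
    using r by (subst integral_distr) auto
  finally show "(\<integral>z. r ^ CARD('n) * F (r *\<^sub>R z) \<partial>lborel) = (\<integral>w. F w \<partial>lborel)" by simp
qed



definition Fb :: "real \<Rightarrow> real \<Rightarrow> real \<Rightarrow> real \<Rightarrow> (real^'n \<Rightarrow> real) \<Rightarrow> real \<Rightarrow> real^'n \<Rightarrow> real" where
  "Fb H C0 G \<delta> K r w = (if norm w < r * \<delta> then H * (norm w)\<^sup>2 * K w
      else C0 * r\<^sup>2 * K w + (if norm w < 1 then G * r * norm w * K w else 0))"

lemma Fb_meas[measurable]:
  assumes [measurable]: "K \<in> borel_measurable lborel"
  shows "Fb H C0 G \<delta> K r \<in> borel_measurable lborel"
  unfolding Fb_def[abs_def] by measurable

lemma Fb_bound:
  assumes K0: "\<forall>w. 0 \<le> K w" and H: "0 \<le> H" "0 \<le> C0" "0 \<le> G" and d: "0 < \<delta>" "\<delta> \<le> 1"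
    and r: "0 < r" "r \<le> 1"
  shows "0 \<le> Fb H C0 G \<delta> K r w"
    and "Fb H C0 G \<delta> K r w \<le> (H + C0 * (1 + 1/\<delta>\<^sup>2) + G/\<delta>) * (min ((norm w)\<^sup>2) 1 * K w)"
proof -
  have Kw: "0 \<le> K w" using K0 by auto
  show "0 \<le> Fb H C0 G \<delta> K r w" using Kw H r by (auto simp: Fb_def)
  let ?C = "H + C0 * (1 + 1/\<delta>\<^sup>2) + G/\<delta>"
  have Cge: "H \<le> ?C" "C0 \<le> ?C" "C0 / \<delta>\<^sup>2 + G / \<delta> \<le> ?C" using H d by (auto simp: algebra_simps)
  show "Fb H C0 G \<delta> K r w \<le> ?C * (min ((norm w)\<^sup>2) 1 * K w)"
  proof (cases "norm w < r * \<delta>")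
    case True
    then have "norm w < 1" using r d by (smt (verit) mult_le_one)
    then have m: "min ((norm w)\<^sup>2) 1 = (norm w)\<^sup>2" by (simp add: power_le_one)
    have "Fb H C0 G \<delta> K r w = H * ((norm w)\<^sup>2 * K w)" using True by (simp add: Fb_def)
    also have "\<dots> \<le> ?C * ((norm w)\<^sup>2 * K w)" using Cge Kw by (intro mult_right_mono) auto
    finally show ?thesis using m by simp
  next
    case False
    show ?thesis
    proof (cases "norm w < 1")
      case w1: True
      then have m: "min ((norm w)\<^sup>2) 1 = (norm w)\<^sup>2" by (simp add: power_le_one)
      have rw: "r \<le> norm w / \<delta>" using False d by (simp add: field_simps)
      have r2: "r\<^sup>2 \<le> (norm w)\<^sup>2 / \<delta>\<^sup>2" using power_mono[OF rw, of 2] r by (simp add: power_divide)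
      have "Fb H C0 G \<delta> K r w = C0 * r\<^sup>2 * K w + G * r * norm w * K w" using False w1 by (simp add: Fb_def)
      also have "\<dots> \<le> C0 * ((norm w)\<^sup>2 / \<delta>\<^sup>2) * K w + G * (norm w / \<delta>) * norm w * K w"
        using r2 rw H Kw by (intro add_mono mult_right_mono mult_left_mono) auto
      also have "\<dots> = (C0 / \<delta>\<^sup>2 + G / \<delta>) * ((norm w)\<^sup>2 * K w)"
        by (simp add: power2_eq_square field_simps)
      also have "\<dots> \<le> ?C * ((norm w)\<^sup>2 * K w)" using Cge Kw by (intro mult_right_mono) auto
      finally show ?thesis using m by simp
    next
      case w1: False
      then have m: "min ((norm w)\<^sup>2) 1 = 1" by (simp add: one_le_power)
      have r2: "r\<^sup>2 \<le> 1" using r by (simp add: power_le_one)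
      have "Fb H C0 G \<delta> K r w = C0 * r\<^sup>2 * K w" using False w1 by (simp add: Fb_def)
      also have "\<dots> \<le> C0 * 1 * K w" using r2 H Kw by (intro mult_right_mono mult_left_mono) auto
      also have "\<dots> \<le> ?C * K w" using Cge Kw by (intro mult_right_mono) auto
      finally show ?thesis using m by simp
    qed
  qed
qed

lemma Fb_lim:
  fixes K :: "real^'n \<Rightarrow> real"
  assumes Km[measurable]: "K \<in> borel_measurable lborel" and K0: "\<forall>w. 0 \<le> K w" and K00: "K 0 = 0"
    and J: "integrable lborel (\<lambda>w. min ((norm w)\<^sup>2) 1 * K w)"
    and H: "0 \<le> H" "0 \<le> C0" "0 \<le> G" and d: "0 < \<delta>" "\<delta> \<le> 1"
    and rs: "\<forall>k. 0 < rs k" "rs \<longlonglongrightarrow> 0"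
  shows "(\<lambda>k. \<integral>w. Fb H C0 G \<delta> K (min (rs k) 1) w \<partial>lborel) \<longlonglongrightarrow> 0"
    and "\<And>k. integrable lborel (Fb H C0 G \<delta> K (min (rs k) 1))"
proof -
  let ?C = "H + C0 * (1 + 1/\<delta>\<^sup>2) + G/\<delta>"
  have w: "integrable lborel (\<lambda>w. ?C * (min ((norm w)\<^sup>2) 1 * K w))" using J by simp
  have bnd: "AE w in lborel. norm (Fb H C0 G \<delta> K (min (rs k) 1) w) \<le> ?C * (min ((norm w)\<^sup>2) 1 * K w)" for k
    using Fb_bound[OF K0 H d, of "min (rs k) 1"] rs(1) by (auto simp: min_def)
  have lim: "AE w in lborel. (\<lambda>k. Fb H C0 G \<delta> K (min (rs k) 1) w) \<longlonglongrightarrow> (\<lambda>w. 0) w"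
  proof (rule AE_I2)
    fix w :: "real^'n"
    show "(\<lambda>k. Fb H C0 G \<delta> K (min (rs k) 1) w) \<longlonglongrightarrow> (\<lambda>w. 0) w"
    proof (cases "w = 0")
      case True
      then show ?thesis using rs(1) d K00 by (simp add: Fb_def)
    next
      case False
      have mr: "(\<lambda>k. min (rs k) 1) \<longlonglongrightarrow> 0"
        using tendsto_min[OF rs(2) tendsto_const[of "1::real"]] by simp
      have ev: "\<forall>\<^sub>F k in sequentially. min (rs k) 1 * \<delta> < norm w"
      proof -
        have "(\<lambda>k. min (rs k) 1 * \<delta>) \<longlonglongrightarrow> 0 * \<delta>" by (intro tendsto_intros mr)
        then show ?thesis using False by (simp add: order_tendstoD(2))
      qed
      have t1: "(\<lambda>k. C0 * (min (rs k) 1)\<^sup>2 * K w) \<longlonglongrightarrow> C0 * 0\<^sup>2 * K w"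
        by (intro tendsto_intros mr)
      have t2: "(\<lambda>k. G * min (rs k) 1 * norm w * K w) \<longlonglongrightarrow> G * 0 * norm w * K w"
        by (intro tendsto_intros mr)
      have "(\<lambda>k. C0 * (min (rs k) 1)\<^sup>2 * K w + (if norm w < 1 then G * min (rs k) 1 * norm w * K w else 0)) \<longlonglongrightarrow> 0"
      proof (cases "norm w < 1")
        case True then show ?thesis using tendsto_add[OF t1 t2] by simp
      next
        case False then show ?thesis using t1 by simp
      qed
      then show ?thesis
        by (rule Lim_transform_eventually) (use ev in \<open>auto elim!: eventually_mono simp: Fb_def\<close>)
    qed
  qed
  have "(\<lambda>k. \<integral>w. Fb H C0 G \<delta> K (min (rs k) 1) w \<partial>lborel) \<longlonglongrightarrow> (\<integral>w. (\<lambda>w. 0) w \<partial>(lborel::(real^'n) measure))"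
    apply (rule integral_dominated_convergence[where s="\<lambda>k. Fb H C0 G \<delta> K (min (rs k) 1)" and f="\<lambda>w. 0" and w="\<lambda>w. ?C * (min ((norm w)\<^sup>2) 1 * K w)"])
    apply simp
    apply simp
    apply (rule w)
    apply (rule lim)
    apply (rule bnd)
    done
  then show "(\<lambda>k. \<integral>w. Fb H C0 G \<delta> K (min (rs k) 1) w \<partial>lborel) \<longlonglongrightarrow> 0" by simp
  show "integrable lborel (Fb H C0 G \<delta> K (min (rs k) 1))" for k
    by (rule integrable_dominated_convergence2[where s="\<lambda>k. Fb H C0 G \<delta> K (min (rs k) 1)" and f="\<lambda>w. 0", OF _ _ w lim bnd]) auto
qed



lemma supinf_close:
  fixes Q P :: "'a \<Rightarrow> 'b \<Rightarrow> real"
  assumes d: "\<And>\<alpha> \<beta>. \<bar>Q \<alpha> \<beta> - P \<alpha> \<beta>\<bar> \<le> \<eta>" and B: "\<And>\<alpha> \<beta>. \<bar>P \<alpha> \<beta>\<bar> \<le> B"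
  shows "\<bar>(SUP \<alpha>. INF \<beta>. Q \<alpha> \<beta>) - (SUP \<alpha>. INF \<beta>. P \<alpha> \<beta>)\<bar> \<le> \<eta>"
proof -
  have bQ: "\<bar>Q \<alpha> \<beta>\<bar> \<le> B + \<eta>" for \<alpha> \<beta> using d[of \<alpha> \<beta>] B[of \<alpha> \<beta>] by linarith
  have Pl: "-B \<le> P \<alpha> \<beta>" "P \<alpha> \<beta> \<le> B" for \<alpha> \<beta> using B[of \<alpha> \<beta>] by auto
  have Ql: "-B-\<eta> \<le> Q \<alpha> \<beta>" "Q \<alpha> \<beta> \<le> B+\<eta>" for \<alpha> \<beta> using bQ[of \<alpha> \<beta>] by auto
  have bbP: "bdd_below (range (P \<alpha>))" for \<alpha>
    by (rule bdd_belowI[of _ "-B"]) (use Pl in blast)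
  have bbQ: "bdd_below (range (Q \<alpha>))" for \<alpha>
    by (rule bdd_belowI[of _ "-B-\<eta>"]) (use Ql in blast)
  have iP: "\<bar>(INF \<beta>. P \<alpha> \<beta>)\<bar> \<le> B" for \<alpha>
  proof -
    have "(INF \<beta>. P \<alpha> \<beta>) \<le> P \<alpha> undefined" by (rule cINF_lower[OF bbP]) simp
    moreover have "-B \<le> (INF \<beta>. P \<alpha> \<beta>)" by (rule cINF_greatest) (use Pl in auto)
    ultimately show ?thesis using B[of \<alpha> undefined] by (auto simp: abs_le_iff)
  qed
  have iQ: "\<bar>(INF \<beta>. Q \<alpha> \<beta>)\<bar> \<le> B + \<eta>" for \<alpha>
  proof -
    have "(INF \<beta>. Q \<alpha> \<beta>) \<le> Q \<alpha> undefined" by (rule cINF_lower[OF bbQ]) simp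
    moreover have "-B-\<eta> \<le> (INF \<beta>. Q \<alpha> \<beta>)" by (rule cINF_greatest) (use Ql in auto)
    ultimately show ?thesis using bQ[of \<alpha> undefined] by (auto simp: abs_le_iff)
  qed
  have i1: "(INF \<beta>. Q \<alpha> \<beta>) \<le> (INF \<beta>. P \<alpha> \<beta>) + \<eta>" for \<alpha>
  proof -
    have "(INF \<beta>. Q \<alpha> \<beta>) - \<eta> \<le> (INF \<beta>. P \<alpha> \<beta>)"
    proof (rule cINF_greatest)
      fix \<beta> have "(INF \<beta>. Q \<alpha> \<beta>) \<le> Q \<alpha> \<beta>" by (rule cINF_lower[OF bbQ]) simp
      then show "(INF \<beta>. Q \<alpha> \<beta>) - \<eta> \<le> P \<alpha> \<beta>" using d[of \<alpha> \<beta>] by (auto simp: abs_le_iff)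
    qed simp
    then show ?thesis by simp
  qed
  have i2: "(INF \<beta>. P \<alpha> \<beta>) \<le> (INF \<beta>. Q \<alpha> \<beta>) + \<eta>" for \<alpha>
  proof -
    have "(INF \<beta>. P \<alpha> \<beta>) - \<eta> \<le> (INF \<beta>. Q \<alpha> \<beta>)"
    proof (rule cINF_greatest)
      fix \<beta> have "(INF \<beta>. P \<alpha> \<beta>) \<le> P \<alpha> \<beta>" by (rule cINF_lower[OF bbP]) simp
      then show "(INF \<beta>. P \<alpha> \<beta>) - \<eta> \<le> Q \<alpha> \<beta>" using d[of \<alpha> \<beta>] by (auto simp: abs_le_iff)
    qed simp
    then show ?thesis by simp
  qed
  have baP: "bdd_above (range (\<lambda>\<alpha>. INF \<beta>. P \<alpha> \<beta>))"
    by (rule bdd_aboveI[of _ B]) (use iP in \<open>auto simp: abs_le_iff\<close>)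
  have baQ: "bdd_above (range (\<lambda>\<alpha>. INF \<beta>. Q \<alpha> \<beta>))"
    by (rule bdd_aboveI[of _ "B+\<eta>"]) (use iQ in \<open>auto simp: abs_le_iff\<close>)
  have s1: "(SUP \<alpha>. INF \<beta>. Q \<alpha> \<beta>) \<le> (SUP \<alpha>. INF \<beta>. P \<alpha> \<beta>) + \<eta>"
  proof -
    have "(SUP \<alpha>. INF \<beta>. Q \<alpha> \<beta>) - \<eta> \<le> (SUP \<alpha>. INF \<beta>. P \<alpha> \<beta>)"
    proof -
      have "(SUP \<alpha>. INF \<beta>. Q \<alpha> \<beta>) \<le> (SUP \<alpha>. INF \<beta>. P \<alpha> \<beta>) + \<eta>"
      proof (rule cSUP_least)
        fix \<alpha> have "(INF \<beta>. P \<alpha> \<beta>) \<le> (SUP \<alpha>. INF \<beta>. P \<alpha> \<beta>)" by (rule cSUP_upper[OF _ baP]) simp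
        then show "(INF \<beta>. Q \<alpha> \<beta>) \<le> (SUP \<alpha>. INF \<beta>. P \<alpha> \<beta>) + \<eta>" using i1[of \<alpha>] by simp
      qed simp
      then show ?thesis by simp
    qed
    then show ?thesis by simp
  qed
  have s2: "(SUP \<alpha>. INF \<beta>. P \<alpha> \<beta>) \<le> (SUP \<alpha>. INF \<beta>. Q \<alpha> \<beta>) + \<eta>"
  proof (rule cSUP_least)
    fix \<alpha> have "(INF \<beta>. Q \<alpha> \<beta>) \<le> (SUP \<alpha>. INF \<beta>. Q \<alpha> \<beta>)" by (rule cSUP_upper[OF _ baQ]) simp
    then show "(INF \<beta>. P \<alpha> \<beta>) \<le> (SUP \<alpha>. INF \<beta>. Q \<alpha> \<beta>) + \<eta>" using i2[of \<alpha>] by simp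
  qed simp
  show ?thesis using s1 s2 by (simp add: abs_le_iff)
qed

lemma trace_bound:
  fixes A H :: "real^'n^'n"
  shows "\<bar>trace (A ** H)\<bar> \<le> real CARD('n) ^ 2 * (norm A * norm H)"
proof -
  have c: "\<bar>A $ i $ j * H $ j $ i\<bar> \<le> norm A * norm H" for i j
  proof -
    have a: "\<bar>A $ i $ j\<bar> \<le> norm A" using component_le_norm_cart[of "A $ i" j] Finite_Cartesian_Product.norm_nth_le[of A i] by linarith
    have h: "\<bar>H $ j $ i\<bar> \<le> norm H" using component_le_norm_cart[of "H $ j" i] Finite_Cartesian_Product.norm_nth_le[of H j] by linarith
    show ?thesis unfolding abs_mult by (rule mult_mono[OF a h]) auto
  qed
  have "\<bar>trace (A ** H)\<bar> = \<bar>\<Sum>i\<in>UNIV. \<Sum>j\<in>UNIV. A $ i $ j * H $ j $ i\<bar>"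
    by (simp add: trace_def matrix_matrix_mult_def)
  also have "\<dots> \<le> (\<Sum>i\<in>(UNIV::'n set). \<Sum>j\<in>(UNIV::'n set). \<bar>A $ i $ j * H $ j $ i\<bar>)"
    by (rule order_trans[OF sum_abs], rule sum_mono, rule sum_abs)
  also have "\<dots> \<le> (\<Sum>i\<in>(UNIV::'n set). \<Sum>j\<in>(UNIV::'n set). norm A * norm H)"
    by (intro sum_mono c)
  also have "\<dots> = real CARD('n) ^ 2 * (norm A * norm H)" by (simp add: power2_eq_square)
  finally show ?thesis .
qed

lemma trace_diff: "trace ((A::real^'n^'n) ** H) - trace (B ** H) = trace ((A - B) ** H)"
  by (simp add: trace_def matrix_matrix_mult_def sum_subtractf[symmetric] algebra_simps)

lemma taylor2:
  fixes \<phi> :: "real^'n \<Rightarrow> real"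
  assumes S: "convex S"
    and d1: "\<And>y. y \<in> S \<Longrightarrow> (\<phi> has_derivative (\<lambda>h. grad \<phi> y \<bullet> h)) (at y)"
    and d2: "\<And>y. y \<in> S \<Longrightarrow> ((grad \<phi>) has_derivative (\<lambda>h. hess \<phi> y *v h)) (at y)"
    and H: "\<And>y. y \<in> S \<Longrightarrow> onorm (\<lambda>h. hess \<phi> y *v h) \<le> H"
    and x: "x \<in> S" and xz: "x + z \<in> S"
  shows "\<bar>\<phi> (x + z) - \<phi> x - grad \<phi> x \<bullet> z\<bar> \<le> H * (norm z)\<^sup>2"
proof -
  have g: "norm (grad \<phi> y - grad \<phi> x) \<le> H * norm (y - x)" if "y \<in> S" for y
    by (rule differentiable_bound[OF S _ H that x]) (auto intro: has_derivative_at_withinI d2)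
  let ?T = "closed_segment x (x + z)"
  have T: "?T \<subseteq> S" using S x xz by (simp add: closed_segment_subset)
  have "norm ((\<phi> (x + z) - grad \<phi> x \<bullet> (x + z)) - (\<phi> x - grad \<phi> x \<bullet> x)) \<le> (H * norm z) * norm ((x + z) - x)"
  proof (rule differentiable_bound[where f = "\<lambda>y. \<phi> y - grad \<phi> x \<bullet> y" and S = ?T
        and f' = "\<lambda>y h. grad \<phi> y \<bullet> h - grad \<phi> x \<bullet> h"])
    show "convex ?T" by simp
    show "((\<lambda>y. \<phi> y - grad \<phi> x \<bullet> y) has_derivative (\<lambda>h. grad \<phi> y \<bullet> h - grad \<phi> x \<bullet> h)) (at y within ?T)"
      if "y \<in> ?T" for y
      using T that
      apply -
      apply (rule has_derivative_diff)
       apply (rule has_derivative_at_withinI)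
       apply (rule d1, blast)
      apply (rule has_derivative_inner_right)
      apply (rule has_derivative_ident)
      done
    show "onorm (\<lambda>h. grad \<phi> y \<bullet> h - grad \<phi> x \<bullet> h) \<le> H * norm z" if "y \<in> ?T" for y
    proof -
      have "onorm (\<lambda>h. grad \<phi> y \<bullet> h - grad \<phi> x \<bullet> h) \<le> norm (grad \<phi> y - grad \<phi> x)"
        by (rule onorm_le) (metis Cauchy_Schwarz_ineq2 inner_diff_left real_norm_def)
      also have "\<dots> \<le> H * norm (y - x)" using g T that by auto
      also have "\<dots> \<le> H * norm z"
      proof -
        have "norm (y - x) \<le> norm z" using that
          using segment_bound(1)[of y x "x+z"] by (simp add: dist_norm norm_minus_commute)
        moreover have "0 \<le> H" using H[OF x] onorm_pos_le[of "\<lambda>h. hess \<phi> x *v h"] by auto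
        ultimately show ?thesis by (simp add: mult_left_mono)
      qed
      finally show ?thesis .
    qed
  qed auto
  then show ?thesis by (simp add: power2_eq_square inner_add_right algebra_simps)
qed



lemma nonlocal_bound:
  fixes \<phi> N' K :: "real^'n \<Rightarrow> real"
  assumes r: "0 < r" and \<phi>m[measurable]: "\<phi> \<in> borel_measurable lborel"
    and Mp: "AE y in lborel. \<bar>\<phi> y\<bar> \<le> Mp"
    and P: "\<bar>\<phi> x\<bar> \<le> P" and G: "norm (grad \<phi> x) \<le> G"
    and tay: "\<And>z. norm z < \<delta> \<Longrightarrow> \<bar>\<phi> (x + z) - \<phi> x - grad \<phi> x \<bullet> z\<bar> \<le> H * (norm z)\<^sup>2"
    and \<delta>r: "\<delta> \<le> 1 / r"
    and N': "\<And>w. 0 \<le> N' w \<and> N' w \<le> K w"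
    and Km[measurable]: "K \<in> borel_measurable lborel"
    and Fint: "integrable lborel (Fb H (Mp + P) G \<delta> K r)"
  shows "\<bar>\<integral>z. (\<phi> (x + z) - \<phi> x - indicator (ball 0 (1/r)) z * (grad \<phi> x \<bullet> z))
            * r ^ (CARD('n) + 2) * N' (r *\<^sub>R z) \<partial>lborel\<bar> \<le> (\<integral>w. Fb H (Mp + P) G \<delta> K r w \<partial>lborel)"
proof -
  let ?F = "Fb H (Mp + P) G \<delta> K r"
  let ?g = "\<lambda>z. (\<phi> (x + z) - \<phi> x - indicator (ball 0 (1/r)) z * (grad \<phi> x \<bullet> z))
            * r ^ (CARD('n) + 2) * N' (r *\<^sub>R z)"
  let ?h = "\<lambda>z. r ^ CARD('n) * ?F (r *\<^sub>R z)"
  have hint: "integrable lborel ?h" and heq: "(\<integral>z. ?h z \<partial>lborel) = (\<integral>w. ?F w \<partial>lborel)"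
    using scale_cov[OF Fb_meas[OF Km] r Fint] by auto
  have Mpz: "AE z in lborel. \<bar>\<phi> (x + z)\<bar> \<le> Mp"
  proof -
    have "AE y in distr lborel borel ((+) x). \<bar>\<phi> y\<bar> \<le> Mp" unfolding lborel_distr_plus by (rule Mp)
    then show ?thesis by (subst (asm) AE_distr_iff) auto
  qed
  have pt: "\<bar>?g z\<bar> \<le> ?h z" if z: "\<bar>\<phi> (x + z)\<bar> \<le> Mp" for z
  proof -
    have Nz: "0 \<le> N' (r *\<^sub>R z)" "N' (r *\<^sub>R z) \<le> K (r *\<^sub>R z)" using N' by auto
    have rp: "0 < r ^ (CARD('n) + 2)" using r by simp
    have nw: "norm (r *\<^sub>R z) = r * norm z" using r by simp
    have ag: "\<bar>?g z\<bar> = \<bar>\<phi> (x + z) - \<phi> x - indicator (ball 0 (1/r)) z * (grad \<phi> x \<bullet> z)\<bar>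
            * r ^ (CARD('n) + 2) * N' (r *\<^sub>R z)" by (simp only: abs_mult abs_of_pos[OF rp] abs_of_nonneg[OF Nz(1)])
    show ?thesis
    proof (cases "norm z < \<delta>")
      case True
      have ind: "indicator (ball 0 (1/r)) z = (1::real)" using True \<delta>r by (simp add: indicator_def)
      have "\<bar>?g z\<bar> = \<bar>\<phi> (x + z) - \<phi> x - grad \<phi> x \<bullet> z\<bar> * r ^ (CARD('n) + 2) * N' (r *\<^sub>R z)"
        using ag ind by simp
      also have "\<dots> \<le> (H * (norm z)\<^sup>2) * r ^ (CARD('n) + 2) * K (r *\<^sub>R z)"
        using tay[OF True] rp Nz
        by (intro mult_mono) (auto intro: order_trans[OF abs_ge_zero])
      also have "\<dots> = ?h z" using True r by (simp add: Fb_def nw power_mult_distrib power_add algebra_simps power2_eq_square)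
      finally show ?thesis .
    next
      case False
      have ind: "indicator (ball 0 (1/r)) z = (if norm (r *\<^sub>R z) < 1 then 1 else (0::real))"
        using r by (simp add: indicator_def nw field_simps)
      have ip: "\<bar>grad \<phi> x \<bullet> z\<bar> \<le> G * norm z"
        using Cauchy_Schwarz_ineq2[of "grad \<phi> x" z] G by (meson mult_right_mono norm_ge_zero order_trans)
      have A: "\<bar>\<phi> (x + z) - \<phi> x - indicator (ball 0 (1/r)) z * (grad \<phi> x \<bullet> z)\<bar>
           \<le> Mp + P + (if norm (r *\<^sub>R z) < 1 then G * norm z else 0)"
        using z P ip unfolding ind by auto
      have "\<bar>?g z\<bar> \<le> (Mp + P + (if norm (r *\<^sub>R z) < 1 then G * norm z else 0)) * r ^ (CARD('n) + 2) * K (r *\<^sub>R z)"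
        unfolding ag using A rp Nz
        by (intro mult_mono) (auto intro: order_trans[OF abs_ge_zero])
      also have "\<dots> = ?h z" using False r
        by (simp add: Fb_def nw power_mult_distrib power_add algebra_simps power2_eq_square)
      finally show ?thesis .
    qed
  qed
  have "\<bar>\<integral>z. ?g z \<partial>lborel\<bar> \<le> (\<integral>z. \<bar>?g z\<bar> \<partial>lborel)"
    using integral_norm_bound[of lborel ?g] by simp
  also have "\<dots> \<le> (\<integral>z. ?h z \<partial>lborel)"
  proof (rule integral_mono_AE'[OF hint])
    show "AE z in lborel. \<bar>?g z\<bar> \<le> ?h z" using Mpz by eventually_elim (rule pt)
    show "AE z in lborel. 0 \<le> ?h z"
      using Mpz by eventually_elim (use pt in \<open>force intro: order_trans[OF abs_ge_zero]\<close>)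
  qed
  also have "\<dots> = (\<integral>w. ?F w \<partial>lborel)" by (rule heq)
  finally show ?thesis .
qed



lemma cont_bound:
  fixes f :: "'c::metric_space \<Rightarrow> 'd::real_normed_vector"
  assumes "continuous_on S f" "compact S"
  shows "\<exists>B. (\<forall>x\<in>S. norm (f x) \<le> B) \<and> 0 < B"
proof -
  have "bounded (f ` S)" by (intro compact_imp_bounded compact_continuous_image assms)
  then show ?thesis by (auto simp: bounded_pos)
qed

lemma abs5: "\<bar>a - b + c + d + e\<bar> \<le> \<bar>a\<bar> + \<bar>b\<bar> + \<bar>c\<bar> + \<bar>d\<bar> + \<bar>(e::real)\<bar>"
  by arith

lemma mat_comp_le: "\<bar>(A::real^'n^'m) $ i $ j\<bar> \<le> norm A"
  using component_le_norm_cart[of "A $ i" j] Finite_Cartesian_Product.norm_nth_le[of A i] by linarith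

theorem lemma3p1:
  fixes a :: "'a \<Rightarrow> 'b \<Rightarrow> real^'n \<Rightarrow> real^'n^'n"
    and b :: "'a \<Rightarrow> 'b \<Rightarrow> real^'n \<Rightarrow> real^'n"
    and c f :: "'a \<Rightarrow> 'b \<Rightarrow> real^'n \<Rightarrow> real"
    and N :: "'a \<Rightarrow> 'b \<Rightarrow> real^'n \<Rightarrow> real^'n \<Rightarrow> real"
    and K :: "real^'n \<Rightarrow> real"
    and lam Lam :: real
    and xs :: "nat \<Rightarrow> real^'n" and rs :: "nat \<Rightarrow> real" and z :: "real^'n"
  assumes A_bdd: "\<exists>M. \<forall>\<alpha> \<beta>. \<forall>x\<in>cball 0 2.
      norm (a \<alpha> \<beta> x) \<le> M \<and> norm (b \<alpha> \<beta> x) \<le> M \<and> \<bar>c \<alpha> \<beta> x\<bar> \<le> M \<and> \<bar>f \<alpha> \<beta> x\<bar> \<le> M"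
    and A_uc: "\<forall>e>0. \<exists>\<delta>>0. \<forall>\<alpha> \<beta>. \<forall>x\<in>cball 0 2. \<forall>y\<in>cball 0 2. dist x y < \<delta> \<longrightarrow>
      dist (a \<alpha> \<beta> x) (a \<alpha> \<beta> y) < e \<and> dist (b \<alpha> \<beta> x) (b \<alpha> \<beta> y) < e
      \<and> dist (c \<alpha> \<beta> x) (c \<alpha> \<beta> y) < e \<and> dist (f \<alpha> \<beta> x) (f \<alpha> \<beta> y) < e"
    and A_sym: "\<forall>\<alpha> \<beta>. \<forall>x\<in>cball 0 2. transpose (a \<alpha> \<beta> x) = a \<alpha> \<beta> x"
    and B_ell: "0 < lam" "lam \<le> Lam"
      "\<forall>\<alpha> \<beta>. \<forall>x\<in>cball 0 2. \<forall>\<xi>.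
         lam * (norm \<xi>)\<^sup>2 \<le> \<xi> \<bullet> (a \<alpha> \<beta> x *v \<xi>) \<and> \<xi> \<bullet> (a \<alpha> \<beta> x *v \<xi>) \<le> Lam * (norm \<xi>)\<^sup>2"
    and C_K: "K \<in> borel_measurable lborel" "\<forall>w. 0 \<le> K w" "K 0 = 0"
      "integrable lborel (\<lambda>w. min ((norm w)\<^sup>2) 1 * K w)"
    and C_N: "\<forall>\<alpha> \<beta>. \<forall>x\<in>cball 0 2. \<forall>w. 0 \<le> N \<alpha> \<beta> x w \<and> N \<alpha> \<beta> x w \<le> K w"
      "\<forall>\<alpha> \<beta>. \<forall>x\<in>cball 0 2. N \<alpha> \<beta> x 0 = 0"
    and C_cont: "\<forall>\<sigma>>0. \<forall>w. norm w \<ge> \<sigma> \<longrightarrow>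
      (\<forall>e>0. \<exists>\<delta>>0. \<forall>\<alpha> \<beta>. \<forall>x\<in>cball 0 2. \<forall>y\<in>cball 0 2.
         dist x y < \<delta> \<longrightarrow> \<bar>N \<alpha> \<beta> x w - N \<alpha> \<beta> y w\<bar> < e)"
    and seq: "\<forall>k. xs k \<in> ball 0 1" "\<forall>k. 0 < rs k"
      "xs \<longlonglongrightarrow> z" "z \<in> cball 0 1" "rs \<longlonglongrightarrow> 0"
  shows "\<forall>x0 \<epsilon> \<phi>. 0 < \<epsilon> \<and> ball x0 \<epsilon> \<subseteq> ball 0 2
      \<and> \<phi> \<in> borel_measurable lborel \<and> (\<exists>M. AE y in lborel. \<bar>\<phi> y\<bar> \<le> M)
      \<and> C2_on (ball x0 \<epsilon>) \<phi> \<longrightarrow>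
      (\<forall>e>0. \<forall>\<^sub>F k in sequentially. \<forall>x\<in>ball x0 (\<epsilon>/2).
         \<bar>op_r a b c f N (rs k) (xs k) x \<phi> - op_0 a z x \<phi>\<bar> < e)"
proof (intro allI impI)
  fix x0 :: "real^'n" and \<epsilon> :: real and \<phi> :: "real^'n \<Rightarrow> real"
  assume hyp: "0 < \<epsilon> \<and> ball x0 \<epsilon> \<subseteq> ball 0 2
      \<and> \<phi> \<in> borel_measurable lborel \<and> (\<exists>M. AE y in lborel. \<bar>\<phi> y\<bar> \<le> M)
      \<and> C2_on (ball x0 \<epsilon>) \<phi>"
  fix e :: real assume e: "0 < e"
  have \<epsilon>: "0 < \<epsilon>" and sub: "ball x0 \<epsilon> \<subseteq> ball 0 2" and \<phi>m: "\<phi> \<in> borel_measurable lborel"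
    and C2: "C2_on (ball x0 \<epsilon>) \<phi>" using hyp by auto
  obtain Mp0 where Mp0: "AE y in lborel. \<bar>\<phi> y\<bar> \<le> Mp0" using hyp by auto
  define Mp where "Mp = max Mp0 0"
  have Mp: "AE y in lborel. \<bar>\<phi> y\<bar> \<le> Mp" using Mp0 by eventually_elim (auto simp: Mp_def)
  have Mp_ge: "0 \<le> Mp" by (simp add: Mp_def)
  obtain Ma where Ma: "\<forall>\<alpha> \<beta>. \<forall>x\<in>cball 0 2.
      norm (a \<alpha> \<beta> x) \<le> Ma \<and> norm (b \<alpha> \<beta> x) \<le> Ma \<and> \<bar>c \<alpha> \<beta> x\<bar> \<le> Ma \<and> \<bar>f \<alpha> \<beta> x\<bar> \<le> Ma"
    using A_bdd by blast
  have Ma_ge: "0 \<le> Ma"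
  proof -
    have "norm (a undefined undefined 0) \<le> Ma" using Ma by auto
    then show ?thesis by (auto intro: order_trans[OF norm_ge_zero])
  qed
  have d1: "\<And>y. y \<in> ball x0 \<epsilon> \<Longrightarrow> (\<phi> has_derivative (\<lambda>h. grad \<phi> y \<bullet> h)) (at y)"
    and d2: "\<And>y. y \<in> ball x0 \<epsilon> \<Longrightarrow> ((grad \<phi>) has_derivative (\<lambda>h. hess \<phi> y *v h)) (at y)"
    and hc: "continuous_on (ball x0 \<epsilon>) (hess \<phi>)" using C2 unfolding C2_on_def by auto
  have \<phi>c: "continuous_on (ball x0 \<epsilon>) \<phi>"
    using d1 has_derivative_continuous by (intro continuous_at_imp_continuous_on) blast
  have gc: "continuous_on (ball x0 \<epsilon>) (grad \<phi>)"
    using d2 has_derivative_continuous by (intro continuous_at_imp_continuous_on) blast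
  have sub1: "cball x0 (\<epsilon>/2) \<subseteq> ball x0 \<epsilon>" using \<epsilon> by (auto simp: subset_eq)
  have sub2: "cball x0 (3*\<epsilon>/4) \<subseteq> ball x0 \<epsilon>" using \<epsilon> by (auto simp: subset_eq)
  obtain P where P: "\<forall>y\<in>cball x0 (\<epsilon>/2). norm (\<phi> y) \<le> P" "0 < P"
    using cont_bound[OF continuous_on_subset[OF \<phi>c sub1]] by auto
  obtain G where G: "\<forall>y\<in>cball x0 (\<epsilon>/2). norm (grad \<phi> y) \<le> G" "0 < G"
    using cont_bound[OF continuous_on_subset[OF gc sub1]] by auto
  obtain Hn where Hn: "\<forall>y\<in>cball x0 (\<epsilon>/2). norm (hess \<phi> y) \<le> Hn" "0 < Hn"
    using cont_bound[OF continuous_on_subset[OF hc sub1]] by auto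
  obtain Hn2 where Hn2: "\<forall>y\<in>cball x0 (3*\<epsilon>/4). norm (hess \<phi> y) \<le> Hn2" "0 < Hn2"
    using cont_bound[OF continuous_on_subset[OF hc sub2]] by auto
  define Hop where "Hop = real CARD('n) * real CARD('n) * Hn2"
  have Hop_ge: "0 \<le> Hop" using Hn2 by (simp add: Hop_def)
  define \<delta>0 where "\<delta>0 = min (\<epsilon>/4) 1"
  have \<delta>0: "0 < \<delta>0" "\<delta>0 \<le> 1" "\<delta>0 \<le> \<epsilon>/4" using \<epsilon> by (auto simp: \<delta>0_def)
  have tay: "\<bar>\<phi> (x + w) - \<phi> x - grad \<phi> x \<bullet> w\<bar> \<le> Hop * (norm w)\<^sup>2"
    if x: "x \<in> ball x0 (\<epsilon>/2)" and w: "norm w < \<delta>0" for x w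
  proof (rule taylor2[where S = "ball x0 (3*\<epsilon>/4)"])
    show "convex (ball x0 (3*\<epsilon>/4))" by simp
    show "(\<phi> has_derivative (\<lambda>h. grad \<phi> y \<bullet> h)) (at y)" if "y \<in> ball x0 (3*\<epsilon>/4)" for y
      using that \<epsilon> by (intro d1) auto
    show "((grad \<phi>) has_derivative (\<lambda>h. hess \<phi> y *v h)) (at y)" if "y \<in> ball x0 (3*\<epsilon>/4)" for y
      using that \<epsilon> by (intro d2) auto
    show "onorm (\<lambda>h. hess \<phi> y *v h) \<le> Hop" if "y \<in> ball x0 (3*\<epsilon>/4)" for y
    proof -
      have "norm (hess \<phi> y) \<le> Hn2" using Hn2 that by auto
      then have "\<bar>hess \<phi> y $ i $ j\<bar> \<le> Hn2" for i j using mat_comp_le[of "hess \<phi> y" i j] by linarith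
      then show ?thesis using onorm_le_matrix_component[of "hess \<phi> y" Hn2] by (simp add: Hop_def)
    qed
    show "x \<in> ball x0 (3*\<epsilon>/4)" using x \<epsilon> by auto
    show "x + w \<in> ball x0 (3*\<epsilon>/4)"
    proof -
      have "dist x0 (x + w) \<le> dist x0 x + norm w"
        by (metis dist_norm dist_triangle2 add_diff_cancel_left' norm_minus_commute)
      then show ?thesis using x w \<delta>0 by auto
    qed
  qed
  note FL = Fb_lim[OF C_K(1) C_K(2) C_K(3) C_K(4) Hop_ge _ _ \<delta>0(1) \<delta>0(2) seq(2) seq(5), of "Mp + P" G]
  define ell where "ell k = (\<integral>w. Fb Hop (Mp + P) G \<delta>0 K (min (rs k) 1) w \<partial>lborel)" for k
  have elllim: "ell \<longlonglongrightarrow> 0" using FL(1) Mp_ge P G by (simp add: ell_def[abs_def])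
  have Fint: "integrable lborel (Fb Hop (Mp + P) G \<delta>0 K (min (rs k) 1))" for k
    using FL(2) Mp_ge P G by simp
  define ea where "ea = (e/4) / (real CARD('n) ^ 2 * Hn + 1)"
  have ea: "0 < ea" "real CARD('n) ^ 2 * Hn * ea \<le> e/4"
  proof -
    have p: "0 < real CARD('n) ^ 2 * Hn + 1" using Hn by (simp add: add_nonneg_pos)
    show "0 < ea" using e p by (simp add: ea_def)
    have "real CARD('n) ^ 2 * Hn * ea = (e/4) * (real CARD('n) ^ 2 * Hn / (real CARD('n) ^ 2 * Hn + 1))"
      by (simp add: ea_def)
    also have "\<dots> \<le> (e/4) * 1" using p e Hn by (intro mult_left_mono) auto
    finally show "real CARD('n) ^ 2 * Hn * ea \<le> e/4" by simp
  qed
  obtain \<delta>a where \<delta>a: "\<delta>a > 0" and \<delta>aP: "\<forall>\<alpha> \<beta>. \<forall>x\<in>cball 0 2. \<forall>y\<in>cball 0 2. dist x y < \<delta>a \<longrightarrow>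
      dist (a \<alpha> \<beta> x) (a \<alpha> \<beta> y) < ea \<and> dist (b \<alpha> \<beta> x) (b \<alpha> \<beta> y) < ea
      \<and> dist (c \<alpha> \<beta> x) (c \<alpha> \<beta> y) < ea \<and> dist (f \<alpha> \<beta> x) (f \<alpha> \<beta> y) < ea"
    using A_uc[rule_format, OF ea(1)] by (elim exE conjE) (rule that)
  have ev1: "\<forall>\<^sub>F k in sequentially. rs k < 1/3" using order_tendstoD(2)[OF seq(5), of "1/3"] by simp
  have ev2: "\<forall>\<^sub>F k in sequentially. ell k < e/4" using order_tendstoD(2)[OF elllim, of "e/4"] e by simp
  have ev3: "\<forall>\<^sub>F k in sequentially. 3 * rs k + norm (xs k - z) < \<delta>a"
  proof -
    have "(\<lambda>k. xs k - z) \<longlonglongrightarrow> 0" using LIM_zero[OF seq(3)] .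
    then have "(\<lambda>k. norm (xs k - z)) \<longlonglongrightarrow> 0" by (rule tendsto_norm_zero)
    then have "(\<lambda>k. 3 * rs k + norm (xs k - z)) \<longlonglongrightarrow> 3 * 0 + 0" by (intro tendsto_intros seq(5))
    then have l: "(\<lambda>k. 3 * rs k + norm (xs k - z)) \<longlonglongrightarrow> 0" by simp
    show ?thesis using order_tendstoD(2)[OF l, of \<delta>a] \<delta>a by simp
  qed
  have ev4: "\<forall>\<^sub>F k in sequentially. rs k * (Ma * G + Ma * P + Ma) < e/4"
  proof -
    have "(\<lambda>k. rs k * (Ma * G + Ma * P + Ma)) \<longlonglongrightarrow> 0 * (Ma * G + Ma * P + Ma)" by (intro tendsto_intros seq(5))
    then have l: "(\<lambda>k. rs k * (Ma * G + Ma * P + Ma)) \<longlonglongrightarrow> 0" by simp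
    show ?thesis using order_tendstoD(2)[OF l, of "e/4"] e by simp
  qed
  show "\<forall>\<^sub>F k in sequentially. \<forall>x\<in>ball x0 (\<epsilon>/2). \<bar>op_r a b c f N (rs k) (xs k) x \<phi> - op_0 a z x \<phi>\<bar> < e"
    using eventually_conj[OF ev1 eventually_conj[OF ev2 eventually_conj[OF ev3 ev4]]]
  proof eventually_elim
    case (elim k)
    define r where "r = rs k"
    have r: "0 < r" "r < 1/3" using elim seq(2) by (auto simp: r_def)
    have mr: "min (rs k) 1 = r" using r by (simp add: r_def)
    have ellk: "ell k < e/4" and r3: "3 * r + norm (xs k - z) < \<delta>a" and r4: "r * (Ma * G + Ma * P + Ma) < e/4"
      using elim by (auto simp: r_def)
    show ?case
    proof
      fix x assume x: "x \<in> ball x0 (\<epsilon>/2)"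
      have xc: "x \<in> cball x0 (\<epsilon>/2)" using x by auto
      have nx: "norm x < 2" using x sub \<epsilon> by (auto simp: subset_eq)
      have nxk: "norm (xs k) < 1" using seq(1) by auto
      define xt where "xt = r *\<^sub>R (x - xs k) + xs k"
      have nd: "norm (x - xs k) < 3" using nx nxk norm_triangle_ineq4[of x "xs k"] by linarith
      have xt2: "xt \<in> cball 0 2"
      proof -
        have "norm xt \<le> r * norm (x - xs k) + norm (xs k)"
          using norm_triangle_ineq[of "r *\<^sub>R (x - xs k)" "xs k"] r by (simp add: xt_def)
        also have "\<dots> \<le> r * 3 + 1" using nd nxk r by (intro add_mono mult_left_mono) auto
        finally show ?thesis using r by simp
      qed
      have z2: "z \<in> cball 0 2" using seq(4) by auto
      have dxt: "dist xt z < \<delta>a"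
      proof -
        have e1: "xt - z = r *\<^sub>R (x - xs k) + (xs k - z)" by (simp add: xt_def algebra_simps)
        have "norm (xt - z) \<le> r * norm (x - xs k) + norm (xs k - z)"
          unfolding e1 using norm_triangle_ineq[of "r *\<^sub>R (x - xs k)" "xs k - z"] r
          by (simp only: norm_scaleR abs_of_pos)
        also have "\<dots> \<le> r * 3 + norm (xs k - z)" using nd r by (intro add_mono mult_left_mono) auto
        finally show ?thesis using r3 by (simp add: dist_norm)
      qed
      define Hx where "Hx = hess \<phi> x"
      have Hx: "norm Hx \<le> Hn" using Hn xc by (auto simp: Hx_def)
      have Px: "\<bar>\<phi> x\<bar> \<le> P" using P xc by auto
      have Gx: "norm (grad \<phi> x) \<le> G" using G xc by auto
      have NL: "\<bar>nonlocal_r N r (xs k) \<alpha> \<beta> x \<phi>\<bar> \<le> ell k" for \<alpha> \<beta>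
      proof -
        have "\<bar>nonlocal_r N r (xs k) \<alpha> \<beta> x \<phi>\<bar> \<le> (\<integral>w. Fb Hop (Mp + P) G \<delta>0 K r w \<partial>lborel)"
          unfolding nonlocal_r_def
        proof (rule nonlocal_bound[OF r(1) \<phi>m Mp Px Gx])
          show "\<bar>\<phi> (x + w) - \<phi> x - grad \<phi> x \<bullet> w\<bar> \<le> Hop * (norm w)\<^sup>2" if "norm w < \<delta>0" for w
            using tay[OF x that] .
          show "\<delta>0 \<le> 1 / r"
          proof -
            have "\<delta>0 * r \<le> 1" using mult_mono[of \<delta>0 1 r 1] \<delta>0 r by simp
            then show ?thesis using r(1) by (simp add: pos_le_divide_eq)
          qed
          show "0 \<le> N \<alpha> \<beta> (r *\<^sub>R (x - xs k) + xs k) w \<and> N \<alpha> \<beta> (r *\<^sub>R (x - xs k) + xs k) w \<le> K w" for w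
            using C_N(1) xt2 by (auto simp: xt_def)
          show "K \<in> borel_measurable lborel" using C_K(1) .
          show "integrable lborel (Fb Hop (Mp + P) G \<delta>0 K r)" using Fint[of k] mr by simp
        qed
        then show ?thesis using mr by (simp add: ell_def)
      qed
      define Q where "Q \<alpha> \<beta> = (let xt = r *\<^sub>R (x - xs k) + xs k in
          - trace (a \<alpha> \<beta> xt ** hess \<phi> x) - nonlocal_r N r (xs k) \<alpha> \<beta> x \<phi>
          + r * (b \<alpha> \<beta> xt \<bullet> grad \<phi> x) + r\<^sup>2 * c \<alpha> \<beta> xt * \<phi> x + r\<^sup>2 * f \<alpha> \<beta> xt)" for \<alpha> \<beta>
      define PP where "PP \<alpha> \<beta> = - trace (a \<alpha> \<beta> z ** hess \<phi> x)" for \<alpha> \<beta>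
      have QP: "\<bar>Q \<alpha> \<beta> - PP \<alpha> \<beta>\<bar> \<le> 3 * e / 4" for \<alpha> \<beta>
      proof -
        have Q: "Q \<alpha> \<beta> - PP \<alpha> \<beta> = (trace (a \<alpha> \<beta> z ** Hx) - trace (a \<alpha> \<beta> xt ** Hx)) - nonlocal_r N r (xs k) \<alpha> \<beta> x \<phi>
          + r * (b \<alpha> \<beta> xt \<bullet> grad \<phi> x) + r\<^sup>2 * c \<alpha> \<beta> xt * \<phi> x + r\<^sup>2 * f \<alpha> \<beta> xt"
          by (simp add: Q_def PP_def Let_def xt_def Hx_def)
        have t1: "\<bar>trace (a \<alpha> \<beta> z ** Hx) - trace (a \<alpha> \<beta> xt ** Hx)\<bar> \<le> e/4"
        proof -
          have "\<bar>trace (a \<alpha> \<beta> z ** Hx) - trace (a \<alpha> \<beta> xt ** Hx)\<bar> = \<bar>trace ((a \<alpha> \<beta> z - a \<alpha> \<beta> xt) ** Hx)\<bar>"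
            by (simp add: trace_diff)
          also have "\<dots> \<le> real CARD('n) ^ 2 * (norm (a \<alpha> \<beta> z - a \<alpha> \<beta> xt) * norm Hx)" by (rule trace_bound)
          also have "\<dots> \<le> real CARD('n) ^ 2 * (ea * Hn)"
          proof -
            have "norm (a \<alpha> \<beta> z - a \<alpha> \<beta> xt) < ea"
              using conjunct1[OF \<delta>aP[rule_format, OF z2 xt2]] dxt by (metis dist_commute dist_norm)
            then show ?thesis using Hx ea(1) by (intro mult_left_mono mult_mono) auto
          qed
          also have "\<dots> \<le> e/4" using ea(2) by (simp add: algebra_simps)
          finally show ?thesis .
        qed
        have Mb: "norm (b \<alpha> \<beta> xt) \<le> Ma" "\<bar>c \<alpha> \<beta> xt\<bar> \<le> Ma" "\<bar>f \<alpha> \<beta> xt\<bar> \<le> Ma" using Ma xt2 by auto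
        have t3: "\<bar>r * (b \<alpha> \<beta> xt \<bullet> grad \<phi> x)\<bar> \<le> r * (Ma * G)"
        proof -
          have "\<bar>b \<alpha> \<beta> xt \<bullet> grad \<phi> x\<bar> \<le> norm (b \<alpha> \<beta> xt) * norm (grad \<phi> x)" by (rule Cauchy_Schwarz_ineq2)
          also have "\<dots> \<le> Ma * G" using Mb Gx by (intro mult_mono) auto
          finally show ?thesis using r by (simp add: abs_mult)
        qed
        have r2: "r\<^sup>2 \<le> r" using r by (simp add: power2_eq_square mult_le_cancel_right1)
        have t4: "\<bar>r\<^sup>2 * c \<alpha> \<beta> xt * \<phi> x\<bar> \<le> r * (Ma * P)"
        proof -
          have "\<bar>c \<alpha> \<beta> xt * \<phi> x\<bar> \<le> Ma * P" unfolding abs_mult using Mb Px by (intro mult_mono) auto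
          then have "r\<^sup>2 * \<bar>c \<alpha> \<beta> xt * \<phi> x\<bar> \<le> r * (Ma * P)" using r2 Ma_ge P r
            by (intro mult_mono) auto
          then show ?thesis by (simp add: abs_mult mult.assoc)
        qed
        have t5: "\<bar>r\<^sup>2 * f \<alpha> \<beta> xt\<bar> \<le> r * Ma"
          unfolding abs_mult using Mb r2 Ma_ge r by (intro mult_mono) auto
        have "\<bar>Q \<alpha> \<beta> - PP \<alpha> \<beta>\<bar> \<le> e/4 + ell k + r * (Ma * G + Ma * P + Ma)"
          unfolding Q using abs5[of "trace (a \<alpha> \<beta> z ** Hx) - trace (a \<alpha> \<beta> xt ** Hx)"
              "nonlocal_r N r (xs k) \<alpha> \<beta> x \<phi>" "r * (b \<alpha> \<beta> xt \<bullet> grad \<phi> x)"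
              "r\<^sup>2 * c \<alpha> \<beta> xt * \<phi> x" "r\<^sup>2 * f \<alpha> \<beta> xt"] t1 NL[of \<alpha> \<beta>] t3 t4 t5
          by (simp only: distrib_left)
        then show ?thesis using ellk r4 by linarith
      qed
      have PPb: "\<bar>PP \<alpha> \<beta>\<bar> \<le> real CARD('n) ^ 2 * (Ma * Hn)" for \<alpha> \<beta>
      proof -
        have "\<bar>PP \<alpha> \<beta>\<bar> \<le> real CARD('n) ^ 2 * (norm (a \<alpha> \<beta> z) * norm (hess \<phi> x))"
          unfolding PP_def abs_minus_cancel by (rule trace_bound)
        also have "\<dots> \<le> real CARD('n) ^ 2 * (Ma * Hn)"
          using Ma z2 Hx Ma_ge by (intro mult_left_mono mult_mono) (auto simp: Hx_def)
        finally show ?thesis .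
      qed
      have "\<bar>(SUP \<alpha>. INF \<beta>. Q \<alpha> \<beta>) - (SUP \<alpha>. INF \<beta>. PP \<alpha> \<beta>)\<bar> \<le> 3 * e / 4"
        by (rule supinf_close[OF QP PPb])
      moreover have "op_r a b c f N (rs k) (xs k) x \<phi> = (SUP \<alpha>. INF \<beta>. Q \<alpha> \<beta>)"
        by (simp add: op_r_def Q_def r_def)
      moreover have "op_0 a z x \<phi> = (SUP \<alpha>. INF \<beta>. PP \<alpha> \<beta>)"
        by (simp add: op_0_def PP_def)
      ultimately show "\<bar>op_r a b c f N (rs k) (xs k) x \<phi> - op_0 a z x \<phi>\<bar> < e" using e by simp
    qed
  qed
qed


end
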